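(* Assume the Lipschitz condition on $f_t,r_t$. Then the operator $\mathcal{B}^{\mathrm{RQE}}_{\mathrm{prop}}$ is Lipschitz: there is a constant $K_{\mathrm{prop}}>0$ such that for all $\pi_a,\pi_b\in\Pi$, $d_{\mathcal{S}}(\mathcal{B}^{\mathrm{RQE}}_{\mathrm{prop}}(\pi_a),\mathcal{B}^{\mathrm{RQE}}_{\mathrm{prop}}(\pi_b))\le K_{\mathrm{prop}}\,d_\Pi(\pi_a,\pi_b)$.
   Context: Let $\mathcal{X},\mathcal{U}$ be finite nonempty sets and $T\ge1$. $\mathcal{P}(E)$ is the set of probability vectors on finite $E$ and $d_{TV}(\mu,\mu')=\frac12\|\mu-\mu'\|_1$. For $t\in\{0,\dots,T-1\}$: kernels $f_t(x'\mid x,u,\mu)$ (a distribution over $x'$ for each $x,u,\mu$) and rewards $r_t:\mathcal{X}\times\mathcal{U}\times\mathcal{P}(\mathcal{X})\to[-R_{\max},R_{\max}]$ with $\sum_{x'}|f_t(x'\mid x,u,\mu)-f_t(x'\mid x,u,\mu')|\le L_fd_{TV}(\mu,\mu')$ and $|r_t(x,u,\mu)-r_t(x,u,\mu')|\le L_rd_{TV}(\mu,\mu')$, $L_f,L_r>0$. A policy is $\pi=(\pi_0,\dots,\pi_{T-1})$ with $\pi_t(\cdot\mid x)\in\mathcal{P}(\mathcal{U})$; $\Pi$ is the set of policies and $d_\Pi(\pi,\pi')=\max_{x,t<T}d_{TV}(\pi_t(\cdot\mid x),\pi'_t(\cdot\mid x))$. Given $\pi$ and $\mu_0$, the mean-field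 flow satisfies $\mu_{t+1}(x')=\sum_x\sum_uf_t(x'\mid x,u,\mu_t)\pi_t(u\mid x)\mu_t(x)$. Given a finite set $\mathbb{M}=\{\mu_0^1,\dots,\mu_0^K\}\subset\mathcal{P}(\mathcal{X})$, $\mathcal{B}^{\mathrm{RQE}}_{\mathrm{prop}}(\pi)=\{\mu^1,\dots,\mu^K\}$ where $\mu^k$ is the flow generated by $\pi$ from $\mu_0^k$; for two such sets, $d_{\mathcal{S}}(\mathcal{S}^1,\mathcal{S}^2)=\max_{k\le K,\,t<T}d_{TV}(\mu^{1,k}_t,\mu^{2,k}_t)$. *)

theory Defs
  imports "HOL-Analysis.Analysis"
begin

definition is_dist :: "('a::finite \<Rightarrow> real) \<Rightarrow> bool" where
  "is_dist p \<longleftrightarrow> (\<forall>a. 0 \<le> p a) \<and> (\<Sum>a\<in>UNIV. p a) = 1"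

definition dTV :: "('a::finite \<Rightarrow> real) \<Rightarrow> ('a \<Rightarrow> real) \<Rightarrow> real" where
  "dTV p q = (1/2) * (\<Sum>a\<in>UNIV. \<bar>p a - q a\<bar>)"

text \<open>Policies: p t x u = pi_t(u | x), for t < T.\<close>
definition is_policy :: "nat \<Rightarrow> (nat \<Rightarrow> 'x::finite \<Rightarrow> 'u::finite \<Rightarrow> real) \<Rightarrow> bool" where
  "is_policy T p \<longleftrightarrow> (\<forall>t<T. \<forall>x. is_dist (p t x))"

definition dPi :: "nat \<Rightarrow> (nat \<Rightarrow> 'x::finite \<Rightarrow> 'u::finite \<Rightarrow> real)
    \<Rightarrow> (nat \<Rightarrow> 'x \<Rightarrow> 'u \<Rightarrow> real) \<Rightarrow> real" where
  "dPi T p q = Max {dTV (p t x) (q t x) | t x. t < T}"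

text \<open>Mean-field flow: f t x u mu x' = f_t(x' | x, u, mu).\<close>
fun mf_flow :: "(nat \<Rightarrow> 'x::finite \<Rightarrow> 'u::finite \<Rightarrow> ('x \<Rightarrow> real) \<Rightarrow> 'x \<Rightarrow> real)
    \<Rightarrow> (nat \<Rightarrow> 'x \<Rightarrow> 'u \<Rightarrow> real) \<Rightarrow> ('x \<Rightarrow> real) \<Rightarrow> nat \<Rightarrow> 'x \<Rightarrow> real" where
  "mf_flow f p mu0 0 = mu0"
| "mf_flow f p mu0 (Suc t) = (\<lambda>x'. \<Sum>x\<in>UNIV. \<Sum>u\<in>UNIV.
      f t x u (mf_flow f p mu0 t) x' * p t x u * mf_flow f p mu0 t x)"

definition B_prop :: "(nat \<Rightarrow> 'x::finite \<Rightarrow> 'u::finite \<Rightarrow> ('x \<Rightarrow> real) \<Rightarrow> 'x \<Rightarrow> real)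
    \<Rightarrow> ('x \<Rightarrow> real) list \<Rightarrow> (nat \<Rightarrow> 'x \<Rightarrow> 'u \<Rightarrow> real) \<Rightarrow> (nat \<Rightarrow> 'x \<Rightarrow> real) list" where
  "B_prop f M p = map (\<lambda>mu0. mf_flow f p mu0) M"

definition dS :: "nat \<Rightarrow> (nat \<Rightarrow> 'x::finite \<Rightarrow> real) list \<Rightarrow> (nat \<Rightarrow> 'x \<Rightarrow> real) list \<Rightarrow> real" where
  "dS T S1 S2 = Max {dTV ((S1 ! k) t) ((S2 ! k) t) | k t. k < length S1 \<and> t < T}"

end

theory Submission
  imports Defs
begin

lemma swap3: "(\<Sum>x'\<in>(UNIV::'a::finite set). \<Sum>x\<in>(UNIV::'b::finite set). \<Sum>u\<in>(UNIV::'c::finite set). g x' x u)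
  = (\<Sum>x\<in>UNIV. \<Sum>u\<in>UNIV. \<Sum>x'\<in>UNIV. g x' x u)"
proof -
  have "(\<Sum>x'\<in>(UNIV::'a set). \<Sum>x\<in>(UNIV::'b set). \<Sum>u\<in>(UNIV::'c set). g x' x u)
     = (\<Sum>x\<in>UNIV. \<Sum>x'\<in>UNIV. \<Sum>u\<in>UNIV. g x' x u)" by (rule sum.swap)
  also have "\<dots> = (\<Sum>x\<in>UNIV. \<Sum>u\<in>UNIV. \<Sum>x'\<in>UNIV. g x' x u)"
    by (rule sum.cong[OF refl], rule sum.swap)
  finally show ?thesis .
qed

lemma flow_dist:
  assumes f_dist: "\<And>t x u mu. t < T \<Longrightarrow> is_dist mu \<Longrightarrow> is_dist (f t x u mu)"
    and p: "is_policy T p" and mu0: "is_dist mu0"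
  shows "t \<le> T \<Longrightarrow> is_dist (mf_flow f p mu0 t)"
proof (induction t)
  case 0 then show ?case using mu0 by simp
next
  case (Suc t)
  let ?m = "mf_flow f p mu0 t"
  have tT: "t < T" using Suc by simp
  have m: "is_dist ?m" using Suc by simp
  have F: "\<And>x u. is_dist (f t x u ?m)" using f_dist tT m by blast
  have P: "\<And>x. is_dist (p t x)" using p tT unfolding is_policy_def by blast
  have nn: "\<forall>x'. 0 \<le> mf_flow f p mu0 (Suc t) x'"
    using F P m unfolding is_dist_def by (auto intro!: sum_nonneg mult_nonneg_nonneg)
  have "(\<Sum>x'\<in>UNIV. mf_flow f p mu0 (Suc t) x')
     = (\<Sum>x\<in>UNIV. \<Sum>u\<in>UNIV. \<Sum>x'\<in>UNIV. f t x u ?m x' * p t x u * ?m x)"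
    unfolding mf_flow.simps by (rule swap3)
  also have "\<dots> = (\<Sum>x\<in>UNIV. \<Sum>u\<in>UNIV. p t x u * ?m x)"
    using F unfolding is_dist_def by (simp add: sum_distrib_right[symmetric])
  also have "\<dots> = (\<Sum>x\<in>UNIV. ?m x)"
    using P unfolding is_dist_def by (simp add: sum_distrib_right[symmetric])
  also have "\<dots> = 1" using m unfolding is_dist_def by simp
  finally show ?case using nn unfolding is_dist_def by simp
qed

lemma step_bound:
  fixes F :: "'x::finite \<Rightarrow> 'u::finite \<Rightarrow> ('x \<Rightarrow> real) \<Rightarrow> 'x \<Rightarrow> real"
  assumes mu: "is_dist mu" and nu: "is_dist nu"
    and P: "\<And>x. is_dist (P x)" and Q: "\<And>x. is_dist (Q x)"
    and Fd: "\<And>x u. is_dist (F x u nu)"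
    and Fl: "\<And>x u. (\<Sum>x'\<in>UNIV. \<bar>F x u mu x' - F x u nu x'\<bar>) \<le> Lf * dTV mu nu"
    and d: "\<And>x. dTV (P x) (Q x) \<le> \<delta>"
  shows "dTV (\<lambda>x'. \<Sum>x\<in>UNIV. \<Sum>u\<in>UNIV. F x u mu x' * P x u * mu x)
             (\<lambda>x'. \<Sum>x\<in>UNIV. \<Sum>u\<in>UNIV. F x u nu x' * Q x u * nu x)
         \<le> (1 + Lf/2) * dTV mu nu + \<delta>"
proof -
  let ?A = "\<lambda>x' x u. \<bar>F x u mu x' - F x u nu x'\<bar> * P x u * mu x"
  let ?B = "\<lambda>x' x u. F x u nu x' * \<bar>P x u - Q x u\<bar> * mu x"
  let ?C = "\<lambda>x' x u. F x u nu x' * Q x u * \<bar>mu x - nu x\<bar>"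
  have pos: "0 \<le> mu x" "0 \<le> P x u" "0 \<le> Q x u" "0 \<le> F x u nu x'" for x u x'
    using mu P Q Fd unfolding is_dist_def by auto
  have pt: "\<bar>(\<Sum>x\<in>UNIV. \<Sum>u\<in>UNIV. F x u mu x' * P x u * mu x) -
            (\<Sum>x\<in>UNIV. \<Sum>u\<in>UNIV. F x u nu x' * Q x u * nu x)\<bar>
        \<le> (\<Sum>x\<in>UNIV. \<Sum>u\<in>UNIV. ?A x' x u + ?B x' x u + ?C x' x u)" for x'
  proof -
    have eq: "(\<Sum>x\<in>UNIV. \<Sum>u\<in>UNIV. F x u mu x' * P x u * mu x) -
            (\<Sum>x\<in>UNIV. \<Sum>u\<in>UNIV. F x u nu x' * Q x u * nu x)
       = (\<Sum>x\<in>UNIV. \<Sum>u\<in>UNIV. (F x u mu x' - F x u nu x') * P x u * mu x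
            + F x u nu x' * (P x u - Q x u) * mu x + F x u nu x' * Q x u * (mu x - nu x))"
    proof -
      have e: "(F x u mu x' - F x u nu x') * P x u * mu x
            + F x u nu x' * (P x u - Q x u) * mu x + F x u nu x' * Q x u * (mu x - nu x)
            = F x u mu x' * P x u * mu x - F x u nu x' * Q x u * nu x" for x u
        by (simp add: algebra_simps)
      show ?thesis by (simp only: e sum_subtractf)
    qed
    have "\<bar>\<Sum>x\<in>UNIV. \<Sum>u\<in>UNIV. (F x u mu x' - F x u nu x') * P x u * mu x
            + F x u nu x' * (P x u - Q x u) * mu x + F x u nu x' * Q x u * (mu x - nu x)\<bar> \<le> (\<Sum>x\<in>UNIV. \<bar>\<Sum>u\<in>UNIV. (F x u mu x' - F x u nu x') * P x u * mu x
            + F x u nu x' * (P x u - Q x u) * mu x + F x u nu x' * Q x u * (mu x - nu x)\<bar>)"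
      by (rule sum_abs)
    also have "\<dots> \<le> (\<Sum>x\<in>UNIV. \<Sum>u\<in>UNIV. \<bar>(F x u mu x' - F x u nu x') * P x u * mu x
            + F x u nu x' * (P x u - Q x u) * mu x + F x u nu x' * Q x u * (mu x - nu x)\<bar>)"
      by (intro sum_mono sum_abs)
    also have "\<dots> \<le> (\<Sum>x\<in>UNIV. \<Sum>u\<in>UNIV. ?A x' x u + ?B x' x u + ?C x' x u)"
    proof (intro sum_mono)
      fix x u
      show "\<bar>(F x u mu x' - F x u nu x') * P x u * mu x
            + F x u nu x' * (P x u - Q x u) * mu x + F x u nu x' * Q x u * (mu x - nu x)\<bar>
            \<le> ?A x' x u + ?B x' x u + ?C x' x u"
      proof -
        have t: "\<bar>a + b + c\<bar> \<le> \<bar>a\<bar> + \<bar>b\<bar> + \<bar>c\<bar>" for a b c :: real by arith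
        show ?thesis using pos(1)[of x] pos(2)[of x u] pos(3)[of x u] pos(4)[of x u x'] by (rule_tac order_trans[OF t]) (simp add: abs_mult)
      qed
    qed
    finally show ?thesis unfolding eq .
  qed
  have h1: "2 * dTV (\<lambda>x'. \<Sum>x\<in>UNIV. \<Sum>u\<in>UNIV. F x u mu x' * P x u * mu x)
             (\<lambda>x'. \<Sum>x\<in>UNIV. \<Sum>u\<in>UNIV. F x u nu x' * Q x u * nu x)
     \<le> (\<Sum>x'\<in>UNIV. \<Sum>x\<in>UNIV. \<Sum>u\<in>UNIV. ?A x' x u + ?B x' x u + ?C x' x u)"
    unfolding dTV_def using pt by (simp add: sum_mono)
  also have h2: "\<dots> = (\<Sum>x\<in>UNIV. \<Sum>u\<in>UNIV. \<Sum>x'\<in>UNIV. ?A x' x u)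
      + (\<Sum>x\<in>UNIV. \<Sum>u\<in>UNIV. \<Sum>x'\<in>UNIV. ?B x' x u)
      + (\<Sum>x\<in>UNIV. \<Sum>u\<in>UNIV. \<Sum>x'\<in>UNIV. ?C x' x u)"
    by (subst swap3) (simp only: sum.distrib)
  finally have h12: "2 * dTV (\<lambda>x'. \<Sum>x\<in>UNIV. \<Sum>u\<in>UNIV. F x u mu x' * P x u * mu x)
             (\<lambda>x'. \<Sum>x\<in>UNIV. \<Sum>u\<in>UNIV. F x u nu x' * Q x u * nu x)
     \<le> (\<Sum>x\<in>UNIV. \<Sum>u\<in>UNIV. \<Sum>x'\<in>UNIV. ?A x' x u)
      + (\<Sum>x\<in>UNIV. \<Sum>u\<in>UNIV. \<Sum>x'\<in>UNIV. ?B x' x u)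
      + (\<Sum>x\<in>UNIV. \<Sum>u\<in>UNIV. \<Sum>x'\<in>UNIV. ?C x' x u)" .
  have hA: "(\<Sum>x\<in>UNIV. \<Sum>u\<in>UNIV. \<Sum>x'\<in>UNIV. ?A x' x u) \<le> Lf * dTV mu nu"
  proof -
    have "(\<Sum>x\<in>UNIV. \<Sum>u\<in>UNIV. \<Sum>x'\<in>UNIV. ?A x' x u)
       = (\<Sum>x\<in>UNIV. \<Sum>u\<in>UNIV. (\<Sum>x'\<in>UNIV. \<bar>F x u mu x' - F x u nu x'\<bar>) * (P x u * mu x))"
      by (simp add: sum_distrib_right mult.assoc)
    also have "\<dots> \<le> (\<Sum>x\<in>UNIV. \<Sum>u\<in>UNIV. (Lf * dTV mu nu) * (P x u * mu x))"
      using pos by (intro sum_mono mult_right_mono Fl) auto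
    also have "\<dots> = Lf * dTV mu nu * (\<Sum>x\<in>UNIV. mu x * (\<Sum>u\<in>UNIV. P x u))"
      by (simp add: sum_distrib_left sum_distrib_right mult_ac)
    also have "\<dots> = Lf * dTV mu nu"
      using P mu unfolding is_dist_def by simp
    finally show ?thesis .
  qed
  have hB: "(\<Sum>x\<in>UNIV. \<Sum>u\<in>UNIV. \<Sum>x'\<in>UNIV. ?B x' x u) \<le> 2 * \<delta>"
  proof -
    have "(\<Sum>x\<in>UNIV. \<Sum>u\<in>UNIV. \<Sum>x'\<in>UNIV. ?B x' x u)
       = (\<Sum>x\<in>UNIV. \<Sum>u\<in>UNIV. (\<Sum>x'\<in>UNIV. F x u nu x') * (\<bar>P x u - Q x u\<bar> * mu x))"
      by (simp add: sum_distrib_right mult.assoc)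
    also have "\<dots> = (\<Sum>x\<in>UNIV. mu x * (2 * dTV (P x) (Q x)))"
      using Fd unfolding is_dist_def dTV_def by (simp add: sum_distrib_left sum_distrib_right mult_ac)
    also have "\<dots> \<le> (\<Sum>x\<in>UNIV. mu x * (2 * \<delta>))"
      using pos d by (intro sum_mono mult_left_mono) auto
    also have "\<dots> = 2 * \<delta>"
      using mu unfolding is_dist_def by (simp add: sum_distrib_right[symmetric])
    finally show ?thesis .
  qed
  have hC: "(\<Sum>x\<in>UNIV. \<Sum>u\<in>UNIV. \<Sum>x'\<in>UNIV. ?C x' x u) = 2 * dTV mu nu"
  proof -
    have "(\<Sum>x\<in>UNIV. \<Sum>u\<in>UNIV. \<Sum>x'\<in>UNIV. ?C x' x u)
       = (\<Sum>x\<in>UNIV. \<Sum>u\<in>UNIV. (\<Sum>x'\<in>UNIV. F x u nu x') * (Q x u * \<bar>mu x - nu x\<bar>))"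
      by (simp add: sum_distrib_right mult.assoc)
    also have "\<dots> = (\<Sum>x\<in>UNIV. (\<Sum>u\<in>UNIV. Q x u) * \<bar>mu x - nu x\<bar>)"
      using Fd unfolding is_dist_def by (simp add: sum_distrib_right)
    also have "\<dots> = 2 * dTV mu nu"
      using Q unfolding is_dist_def dTV_def by simp
    finally show ?thesis .
  qed
  have "(1 + Lf/2) * dTV mu nu = dTV mu nu + (Lf * dTV mu nu) / 2" by (simp add: algebra_simps)
  then show ?thesis using h12 hA hB hC by linarith
qed


lemma dTV_nonneg: "0 \<le> dTV p q"
  unfolding dTV_def by (simp add: sum_nonneg)

lemma flow_diff:
  fixes f :: "nat \<Rightarrow> 'x::finite \<Rightarrow> 'u::finite \<Rightarrow> ('x \<Rightarrow> real) \<Rightarrow> 'x \<Rightarrow> real"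
  assumes f_dist: "\<And>t x u mu. t < T \<Longrightarrow> is_dist mu \<Longrightarrow> is_dist (f t x u mu)"
    and f_lip: "\<And>t x u mu mu'. t < T \<Longrightarrow> is_dist mu \<Longrightarrow> is_dist mu' \<Longrightarrow>
        (\<Sum>x'\<in>UNIV. \<bar>f t x u mu x' - f t x u mu' x'\<bar>) \<le> Lf * dTV mu mu'"
    and Lf: "Lf > 0"
    and pa: "is_policy T pa" and pb: "is_policy T pb" and mu0: "is_dist mu0"
    and d: "\<And>t x. t < T \<Longrightarrow> dTV (pa t x) (pb t x) \<le> \<delta>"
    and T: "T \<ge> 1"
  shows "t \<le> T \<Longrightarrow> dTV (mf_flow f pa mu0 t) (mf_flow f pb mu0 t) \<le> (2 + Lf) ^ t * \<delta>"
proof (induction t)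
  case 0
  have "dTV (pa 0 undefined) (pb 0 undefined) \<le> \<delta>" using T by (intro d) simp
  then have "0 \<le> \<delta>" using dTV_nonneg[of "pa 0 undefined" "pb 0 undefined"] by linarith
  then show ?case by (simp add: dTV_def)
next
  case (Suc t)
  have tT: "t < T" using Suc by simp
  have dpos: "0 \<le> \<delta>" using d[OF tT, of undefined] dTV_nonneg[of "pa t undefined" "pb t undefined"] by linarith
  let ?m = "mf_flow f pa mu0 t" and ?n = "mf_flow f pb mu0 t"
  have m: "is_dist ?m" using flow_dist[OF f_dist pa mu0] tT by simp
  have n: "is_dist ?n" using flow_dist[OF f_dist pb mu0] tT by simp
  have IH: "dTV ?m ?n \<le> (2 + Lf) ^ t * \<delta>" using Suc tT by simp
  have st: "dTV (mf_flow f pa mu0 (Suc t)) (mf_flow f pb mu0 (Suc t)) \<le> (1 + Lf/2) * dTV ?m ?n + \<delta>"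
    unfolding mf_flow.simps
    apply (rule step_bound[OF m n])
    using pa pb tT f_dist[OF tT n] f_lip[OF tT m n] d[OF tT] unfolding is_policy_def by auto
  have a1: "1 \<le> (2 + Lf) ^ t" using Lf by (simp add: one_le_power)
  have "(1 + Lf/2) * dTV ?m ?n + \<delta> \<le> (1 + Lf/2) * ((2 + Lf) ^ t * \<delta>) + \<delta>"
    using IH Lf by (intro add_right_mono mult_left_mono) auto
  also have "\<dots> \<le> (2 + Lf) ^ Suc t * \<delta>"
  proof -
    have "(1 + Lf/2) * ((2 + Lf) ^ t * \<delta>) + \<delta> \<le> (1 + Lf/2) * ((2 + Lf) ^ t * \<delta>) + (1 + Lf/2) * ((2 + Lf) ^ t * \<delta>)"
    proof -
      have "1 * \<delta> \<le> ((1 + Lf/2) * (2 + Lf) ^ t) * \<delta>"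
        using dpos a1 Lf by (intro mult_right_mono) (auto intro: order_trans[OF a1] simp: mult_le_cancel_right1)
      then show ?thesis by (simp add: mult_ac)
    qed
    also have "\<dots> = (2 + Lf) ^ Suc t * \<delta>" by (simp add: algebra_simps)
    finally show ?thesis .
  qed
  finally show ?case using st by linarith
qed

theorem lemma5:
  fixes f :: "nat \<Rightarrow> 'x::finite \<Rightarrow> 'u::finite \<Rightarrow> ('x \<Rightarrow> real) \<Rightarrow> 'x \<Rightarrow> real"
    and r :: "nat \<Rightarrow> 'x \<Rightarrow> 'u \<Rightarrow> ('x \<Rightarrow> real) \<Rightarrow> real"
    and T :: nat and Lf Lr Rmax :: real
    and M :: "('x \<Rightarrow> real) list"
  assumes T: "T \<ge> 1"
    and Lf: "Lf > 0" and Lr: "Lr > 0"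
    and f_dist: "\<And>t x u mu. t < T \<Longrightarrow> is_dist mu \<Longrightarrow> is_dist (f t x u mu)"
    and r_bdd: "\<And>t x u mu. t < T \<Longrightarrow> is_dist mu \<Longrightarrow> \<bar>r t x u mu\<bar> \<le> Rmax"
    and f_lip: "\<And>t x u mu mu'. t < T \<Longrightarrow> is_dist mu \<Longrightarrow> is_dist mu' \<Longrightarrow>
        (\<Sum>x'\<in>UNIV. \<bar>f t x u mu x' - f t x u mu' x'\<bar>) \<le> Lf * dTV mu mu'"
    and r_lip: "\<And>t x u mu mu'. t < T \<Longrightarrow> is_dist mu \<Longrightarrow> is_dist mu' \<Longrightarrow>
        \<bar>r t x u mu - r t x u mu'\<bar> \<le> Lr * dTV mu mu'"
    and M_ne: "M \<noteq> []"
    and M_dist: "\<And>mu0. mu0 \<in> set M \<Longrightarrow> is_dist mu0"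
  shows "\<exists>Kprop > 0. \<forall>pa pb. is_policy T pa \<longrightarrow> is_policy T pb \<longrightarrow>
     dS T (B_prop f M pa) (B_prop f M pb) \<le> Kprop * dPi T pa pb"
proof (intro exI[of _ "(2 + Lf) ^ T"] conjI allI impI)
  show "0 < (2 + Lf) ^ T" using Lf by simp
  fix pa pb :: "nat \<Rightarrow> 'x \<Rightarrow> 'u \<Rightarrow> real"
  assume pa: "is_policy T pa" and pb: "is_policy T pb"
  let ?\<delta> = "dPi T pa pb"
  have fin: "finite {dTV (pa t x) (pb t x) | t x. t < T}"
  proof -
    have "{dTV (pa t x) (pb t x) | t x. t < T} = (\<lambda>(t,x). dTV (pa t x) (pb t x)) ` ({..<T} \<times> UNIV)"
      by auto
    then show ?thesis by simp
  qed
  have d: "dTV (pa t x) (pb t x) \<le> ?\<delta>" if "t < T" for t x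
    unfolding dPi_def by (rule Max_ge[OF fin]) (use that in blast)
  have A: "dTV (mf_flow f pa mu0 t) (mf_flow f pb mu0 t) \<le> (2 + Lf) ^ T * ?\<delta>"
    if "mu0 \<in> set M" "t < T" for mu0 t
  proof -
    have dpos: "0 \<le> ?\<delta>" using d[OF that(2), of undefined] dTV_nonneg[of "pa t undefined" "pb t undefined"] by linarith
    have "dTV (mf_flow f pa mu0 t) (mf_flow f pb mu0 t) \<le> (2 + Lf) ^ t * ?\<delta>"
      by (rule flow_diff[OF f_dist f_lip Lf pa pb M_dist[OF that(1)] d T]) (use that in auto)
    also have "\<dots> \<le> (2 + Lf) ^ T * ?\<delta>"
      using dpos Lf that by (intro mult_right_mono power_increasing) auto
    finally show ?thesis .
  qed
  have finS: "finite {dTV ((B_prop f M pa ! k) t) ((B_prop f M pb ! k) t) | k t. k < length (B_prop f M pa) \<and> t < T}"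
  proof -
    have "{dTV ((B_prop f M pa ! k) t) ((B_prop f M pb ! k) t) | k t. k < length (B_prop f M pa) \<and> t < T}
      = (\<lambda>(k,t). dTV ((B_prop f M pa ! k) t) ((B_prop f M pb ! k) t)) ` ({..<length (B_prop f M pa)} \<times> {..<T})"
      by auto
    then show ?thesis by simp
  qed
  show "dS T (B_prop f M pa) (B_prop f M pb) \<le> (2 + Lf) ^ T * ?\<delta>"
    unfolding dS_def
  proof (rule Max.boundedI[OF finS])
    show "{dTV ((B_prop f M pa ! k) t) ((B_prop f M pb ! k) t) | k t. k < length (B_prop f M pa) \<and> t < T} \<noteq> {}"
    proof -
      have k0: "0 < length M" using M_ne by simp
      have t0: "0 < T" using T by simp
      show ?thesis using k0 t0 by (force simp: B_prop_def)
    qed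
  next
    fix a assume "a \<in> {dTV ((B_prop f M pa ! k) t) ((B_prop f M pb ! k) t) | k t. k < length (B_prop f M pa) \<and> t < T}"
    then obtain k t where kt: "k < length M" "t < T"
      and a: "a = dTV (mf_flow f pa (M ! k) t) (mf_flow f pb (M ! k) t)"
      by (auto simp: B_prop_def)
    show "a \<le> (2 + Lf) ^ T * ?\<delta>" unfolding a using A[OF nth_mem[OF kt(1)] kt(2)] .
  qed
qed

end
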